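(* Let $N\ge1$, $n=\sum_{\nu=1}^N n_\nu$, $m\ge1$. For $\nu=1,\dots,N$ let $Q_\nu\in\mathbb{R}^{n_\nu\times n_\nu}$ be symmetric positive definite, $c_\nu\in\mathbb{R}^{n_\nu}$, and $X_\nu\subseteq\mathbb{R}^{n_\nu}$ nonempty, convex and closed; let $X=X_1\times\dots\times X_N$. Let $a\in\mathbb{R}^m$, $a\ge0$, $Q_y\in\mathbb{R}^{m\times m}$ positive definite diagonal, and $b,l:\mathbb{R}^n\to\mathbb{R}^m$ differentiable. Define $$\varphi(x)=\sum_{i=1}^m a_i\max\{(Q_y^{-1}b(x))_i,\,l_i(x)\},\qquad \Theta(x)=\sum_{\nu=1}^N\Big[\tfrac12 x_\nu^\top Q_\nu x_\nu+c_\nu^\top x_\nu\Big]+\varphi(x).$$ Assume there exist $\rho\ge0$ and $\omega_1,\omega_2\in\mathbb{R}$ such that for all $x\in X$ with $\|x\|>\rho$, $$\min\{0,\varphi(x)\}\ge\omega_1\|x\|+\omega_2.$$ Then $\Theta$ is coercive on $X$, i.e. $\Theta(x)\to\infty$ as $\|x\|\to\infty$ with $x\in X$.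
   Context: Here $x=(x_1,\dots,x_N)$ with $x_\nu\in\mathbb{R}^{n_\nu}$; the maxima are componentwise. *)

theory Defs
  imports "HOL-Analysis.Analysis"
begin

text \<open>Players are indexed by a finite type 'p (N = CARD('p) \<ge> 1), coordinates of
  R^n by a finite type 'n; blk i is the player owning coordinate i. The block space
  R^{n_nu} is embedded in R^n as the coordinate subspace of vectors vanishing
  outside block nu.\<close>

definition block_space :: "('n::finite \<Rightarrow> 'p) \<Rightarrow> 'p \<Rightarrow> (real^'n) set" where
  "block_space blk \<nu> = {z. \<forall>i. blk i \<noteq> \<nu> \<longrightarrow> z $ i = 0}"

definition proj :: "('n::finite \<Rightarrow> 'p) \<Rightarrow> 'p \<Rightarrow> real^'n \<Rightarrow> real^'n" where
  "proj blk \<nu> x = (\<chi> i. if blk i = \<nu> then x $ i else 0)"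

definition phi :: "real^'m::finite \<Rightarrow> real^'m^'m \<Rightarrow> (real^'n \<Rightarrow> real^'m)
    \<Rightarrow> (real^'n \<Rightarrow> real^'m) \<Rightarrow> real^'n \<Rightarrow> real" where
  "phi a Qy b l x = (\<Sum>i\<in>UNIV. a $ i * max ((matrix_inv Qy *v b x) $ i) (l x $ i))"

definition Theta :: "('n::finite \<Rightarrow> 'p::finite) \<Rightarrow> ('p \<Rightarrow> real^'n^'n) \<Rightarrow> ('p \<Rightarrow> real^'n)
    \<Rightarrow> real^'m::finite \<Rightarrow> real^'m^'m \<Rightarrow> (real^'n \<Rightarrow> real^'m)
    \<Rightarrow> (real^'n \<Rightarrow> real^'m) \<Rightarrow> real^'n \<Rightarrow> real" where
  "Theta blk Q c a Qy b l x =
     (\<Sum>\<nu>\<in>UNIV. (1/2) * (proj blk \<nu> x \<bullet> (Q \<nu> *v proj blk \<nu> x)) + c \<nu> \<bullet> proj blk \<nu> x)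
     + phi a Qy b l x"

end

theory Submission
  imports Defs
begin

lemma proj_linear: "linear (proj blk \<nu>)"
  unfolding linear_iff proj_def by (auto simp: vec_eq_iff)

lemma proj_bs: "proj blk \<nu> x \<in> block_space blk \<nu>"
  unfolding proj_def block_space_def by auto

lemma proj_cont: "continuous_on S (proj blk \<nu>)"
  by (rule linear_continuous_on[OF proj_linear[unfolded linear_conv_bounded_linear]])

lemma projQ_cont: "continuous_on S (\<lambda>x. (A::real^'n^'n) *v proj blk \<nu> x)"
proof -
  have "continuous_on S ((*v) A \<circ> proj blk \<nu>)"
    by (intro continuous_on_compose proj_cont matrix_vector_mult_linear_continuous_on)
  thus ?thesis by (simp add: o_def)
qed

lemma proj_norm: "norm (proj blk \<nu> x) \<le> norm x"
proof -
  have "proj blk \<nu> x \<bullet> proj blk \<nu> x \<le> x \<bullet> x"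
    unfolding inner_vec_def proj_def by (intro sum_mono) auto
  thus ?thesis by (rule iffD2[OF norm_le])
qed

theorem mainTheorem3:
  fixes blk :: "'n::finite \<Rightarrow> 'p::finite"
    and Q :: "'p \<Rightarrow> real^'n^'n" and c :: "'p \<Rightarrow> real^'n"
    and XX :: "'p \<Rightarrow> (real^'n) set"
    and a :: "real^'m::finite" and Qy :: "real^'m^'m"
    and b l :: "real^'n \<Rightarrow> real^'m"
  assumes Q_block: "\<And>\<nu> i j. blk i \<noteq> \<nu> \<or> blk j \<noteq> \<nu> \<Longrightarrow> Q \<nu> $ i $ j = 0"
    and Q_sym: "\<And>\<nu>. transpose (Q \<nu>) = Q \<nu>"
    and Q_pd: "\<And>\<nu> z. z \<in> block_space blk \<nu> \<Longrightarrow> z \<noteq> 0 \<Longrightarrow> z \<bullet> (Q \<nu> *v z) > 0"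
    and c_block: "\<And>\<nu>. c \<nu> \<in> block_space blk \<nu>"
    and X_sub: "\<And>\<nu>. XX \<nu> \<subseteq> block_space blk \<nu>"
    and X_ne: "\<And>\<nu>. XX \<nu> \<noteq> {}"
    and X_convex: "\<And>\<nu>. convex (XX \<nu>)"
    and X_closed: "\<And>\<nu>. closed (XX \<nu>)"
    and a_nonneg: "\<And>i. a $ i \<ge> 0"
    and Qy_diag: "\<And>i j. i \<noteq> j \<Longrightarrow> Qy $ i $ j = 0"
    and Qy_pos: "\<And>i. Qy $ i $ i > 0"
    and b_diff: "\<And>x. b differentiable (at x)"
    and l_diff: "\<And>x. l differentiable (at x)"
    and growth: "\<exists>\<rho>\<ge>0. \<exists>\<omega>1 \<omega>2. \<forall>x. (\<forall>\<nu>. proj blk \<nu> x \<in> XX \<nu>) \<longrightarrow> norm x > \<rho> \<longrightarrow>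
                   min 0 (phi a Qy b l x) \<ge> \<omega>1 * norm x + \<omega>2"
  shows "\<forall>M. \<exists>R. \<forall>x. (\<forall>\<nu>. proj blk \<nu> x \<in> XX \<nu>) \<longrightarrow> norm x > R \<longrightarrow>
           Theta blk Q c a Qy b l x > M"
proof
  fix M :: real
  obtain \<rho> \<omega>1 \<omega>2 where rho: "\<rho> \<ge> 0" and gr: "\<And>x. (\<forall>\<nu>. proj blk \<nu> x \<in> XX \<nu>) \<Longrightarrow> norm x > \<rho> \<Longrightarrow>
                   min 0 (phi a Qy b l x) \<ge> \<omega>1 * norm x + \<omega>2"
    using growth by blast
  define q where "q x = (\<Sum>\<nu>\<in>UNIV. proj blk \<nu> x \<bullet> (Q \<nu> *v proj blk \<nu> x))" for x
  have nn: "0 \<le> z \<bullet> (Q \<nu> *v z)" if "z \<in> block_space blk \<nu>" for z \<nu>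
    using Q_pd[OF that] by (cases "z = 0") (auto intro: less_imp_le)
  have qpos: "q x > 0" if hx: "x \<noteq> 0" for x
  proof -
    obtain i where i: "x $ i \<noteq> 0" using hx by (metis vec_eq_iff zero_index)
    have "proj blk (blk i) x $ i = x $ i" by (simp add: proj_def)
    hence "proj blk (blk i) x \<noteq> 0" using i by auto
    hence "0 < proj blk (blk i) x \<bullet> (Q (blk i) *v proj blk (blk i) x)"
      by (rule Q_pd[OF proj_bs])
    thus ?thesis unfolding q_def
      by (intro sum_pos2[where i="blk i"]) (auto intro: nn proj_bs)
  qed
  have qhom: "q (t *\<^sub>R x) = t\<^sup>2 * q x" for t x
  proof -
    have "proj blk \<nu> (t *\<^sub>R x) = t *\<^sub>R proj blk \<nu> x" for \<nu>
      unfolding proj_def by (simp add: vec_eq_iff)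
    hence "proj blk \<nu> (t *\<^sub>R x) \<bullet> (Q \<nu> *v proj blk \<nu> (t *\<^sub>R x))
        = t\<^sup>2 * (proj blk \<nu> x \<bullet> (Q \<nu> *v proj blk \<nu> x))" for \<nu>
      by (simp only: matrix_vector_mult_scaleR inner_scaleR_left inner_scaleR_right power2_eq_square mult.assoc)
    thus ?thesis unfolding q_def by (simp only: sum_distrib_left)
  qed
  have qcont: "continuous_on UNIV q"
    unfolding q_def by (intro continuous_intros proj_cont projQ_cont)
  have "compact (sphere (0::real^'n) 1)" by simp
  moreover have "sphere (0::real^'n) 1 \<noteq> {}" by simp
  ultimately obtain x0 where x0: "x0 \<in> sphere 0 1" and x0m: "\<And>y. y \<in> sphere 0 1 \<Longrightarrow> q x0 \<le> q y"
    using continuous_attains_inf[of "sphere (0::real^'n) 1" q] qcont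
    by (meson continuous_on_subset subset_UNIV)
  define lam where "lam = q x0"
  have "x0 \<noteq> 0" using x0 by auto
  hence lam: "lam > 0" unfolding lam_def by (rule qpos)
  have qlow: "q x \<ge> lam * (norm x)\<^sup>2" for x
  proof (cases "x = 0")
    case True thus ?thesis using qhom[of 0 x] by simp
  next
    case False
    let ?u = "(1 / norm x) *\<^sub>R x"
    have "?u \<in> sphere 0 1" using False by simp
    hence "lam \<le> q ?u" using x0m lam_def by blast
    moreover have eq: "norm x *\<^sub>R ?u = x" using False by simp
    moreover have "q x = (norm x)\<^sup>2 * q ?u" using qhom[of "norm x" ?u] unfolding eq .
    ultimately show ?thesis by (simp add: mult.commute[of lam] mult_left_mono)
  qed
  define C where "C = (\<Sum>\<nu>\<in>UNIV. norm (c \<nu>))"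
  have Lin: "(\<Sum>\<nu>\<in>UNIV. c \<nu> \<bullet> proj blk \<nu> x) \<ge> - C * norm x" for x
  proof -
    have "c \<nu> \<bullet> proj blk \<nu> x \<ge> - (norm (c \<nu>) * norm x)" for \<nu>
    proof -
      have "\<bar>c \<nu> \<bullet> proj blk \<nu> x\<bar> \<le> norm (c \<nu>) * norm (proj blk \<nu> x)" by (rule Cauchy_Schwarz_ineq2)
      also have "\<dots> \<le> norm (c \<nu>) * norm x" by (intro mult_left_mono proj_norm) auto
      finally show ?thesis by linarith
    qed
    hence "(\<Sum>\<nu>\<in>UNIV. c \<nu> \<bullet> proj blk \<nu> x) \<ge> (\<Sum>\<nu>\<in>UNIV. - (norm (c \<nu>) * norm x))"
      by (intro sum_mono) auto
    thus ?thesis by (simp add: C_def sum_distrib_right sum_negf)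
  qed
  have Th: "Theta blk Q c a Qy b l x = (1/2) * q x + (\<Sum>\<nu>\<in>UNIV. c \<nu> \<bullet> proj blk \<nu> x) + phi a Qy b l x" for x
    unfolding Theta_def q_def by (simp only: sum.distrib sum_distrib_left)
  define K where "K = C + \<bar>\<omega>1\<bar>"
  define R where "R = max \<rho> (max 1 ((2*K + 2*\<bar>M\<bar> + 2*\<bar>\<omega>2\<bar> + 2) / lam))"
  show "\<exists>R. \<forall>x. (\<forall>\<nu>. proj blk \<nu> x \<in> XX \<nu>) \<longrightarrow> norm x > R \<longrightarrow> Theta blk Q c a Qy b l x > M"
  proof (intro exI allI impI)
    fix x assume X: "\<forall>\<nu>. proj blk \<nu> x \<in> XX \<nu>" and nx: "norm x > R"
    define r where "r = norm x"
    have r1: "r \<ge> 1" and rr: "r > \<rho>" using nx unfolding R_def r_def by auto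
    have "r > (2*K + 2*\<bar>M\<bar> + 2*\<bar>\<omega>2\<bar> + 2) / lam" using nx unfolding R_def r_def by auto
    hence h1: "lam * r > 2*K + 2*\<bar>M\<bar> + 2*\<bar>\<omega>2\<bar> + 2" using lam by (simp add: field_simps)
    have h2: "(lam * r) * r \<ge> (2*K + 2*\<bar>M\<bar> + 2*\<bar>\<omega>2\<bar> + 2) * r"
      using h1 r1 by (intro mult_right_mono) auto
    have h3: "(2*K + 2*\<bar>M\<bar> + 2*\<bar>\<omega>2\<bar> + 2) * r = 2*(K*r) + 2*(\<bar>M\<bar>*r) + 2*(\<bar>\<omega>2\<bar>*r) + 2*r"
      by (simp add: algebra_simps)
    have a1: "\<bar>M\<bar> * r \<ge> \<bar>M\<bar>" using mult_left_mono[OF r1, of "\<bar>M\<bar>"] by simp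
    have a2: "\<bar>\<omega>2\<bar> * r \<ge> \<bar>\<omega>2\<bar>" using mult_left_mono[OF r1, of "\<bar>\<omega>2\<bar>"] by simp
    have key: "lam * r * r / 2 - K * r + \<omega>2 > M"
      using h2 h3 a1 a2 r1 by linarith
    have "\<omega>1 * norm x + \<omega>2 \<le> min 0 (phi a Qy b l x)" using gr[OF X] rr r_def by simp
    hence ph: "phi a Qy b l x \<ge> \<omega>1 * r + \<omega>2" by (simp add: r_def)
    have "- \<bar>\<omega>1\<bar> \<le> \<omega>1" by simp
    hence w: "- \<bar>\<omega>1\<bar> * r \<le> \<omega>1 * r" using r1 by (intro mult_right_mono) auto
    have e1: "- \<bar>\<omega>1\<bar> * r = - (\<bar>\<omega>1\<bar> * r)" by simp
    have e2: "- C * norm x = - (C * r)" by (simp add: r_def)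
    have e3: "K * r = C * r + \<bar>\<omega>1\<bar> * r" by (simp add: K_def algebra_simps)
    have e4: "lam * (norm x)\<^sup>2 = lam * r * r" by (simp add: r_def power2_eq_square)
    have "Theta blk Q c a Qy b l x \<ge> lam * r * r / 2 - K * r + \<omega>2"
      using Th[of x] qlow[of x] Lin[of x] ph w e1 e2 e3 e4 by linarith
    with key show "Theta blk Q c a Qy b l x > M" by linarith
  qed
qed

end
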